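(* Let $\mu$ be a distribution over $\{0,1\}^V$ and $\theta\in(0,1)$. For every vertex $i\in V$ and every distribution $\nu$ on $\Omega(\pi)$ such that the function $\sigma\mapsto\nu(\sigma)/\pi(\sigma)$ is increasing on $\Omega(\pi)$, we have $\nu P^i_{\pi\text{-GD}}\preceq_{\mathrm{sd}}\nu P^i_{\mathrm{s\text{-}GD}}$; that is, $P^i_{\pi\text{-GD}}\preceq_{\mathrm{mc}}P^i_{\mathrm{s\text{-}GD}}$.
   Context: Tilted $(\theta*\mu)(\sigma)\propto\mu(\sigma)\theta^{\|\sigma\|_1}$. $\mathsf{lift}:\{0,1\}^V\to\{0,1,\star\}^V$ random: independently per coordinate $0\mapsto0$, $1\mapsto\star$ w.p. $1-\theta$, $1\mapsto1$ w.p. $\theta$; $\mathsf{contr}$: $0\mapsto0$, $1,\star\mapsto1$. $\pi$: law of $\mathsf{lift}(X)$, $X\sim\mu$, support $\Omega(\pi)$. $P^i_{\pi\text{-GD}}$: resample $X_i$ from $\pi$ conditioned on $X_{V\setminus\{i\}}$. $P^i_{\mathrm{s\text{-}GD}}$: if $X_i=\star$ keep it; otherwise resample $X_i\in\{0,1\}$ from $(\theta*\mu)_i^{\sigma_{V\setminus\{i\}}}$ with $\sigma=\mathsf{contr}(X)$. Order $0<1<\star$, coordinatewise partial order on $\{0,1,\star\}^V$; $f$ increasing means $X\preceq Y\Rightarrow f(X)\le f(Y)$; $\nu\preceq_{\mathrm{sd}}\nu'$ iff $\mathbb E_\nu f\le\mathbb E_{\nu'}f$ for every increasing $f\ge0$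 (equivalently, a monotone coupling exists). $P\preceq_{\mathrm{mc}}Q$ means $\nu P\preceq_{\mathrm{sd}}\nu Q$ for all $\nu$ with $\nu/\pi$ increasing. *)

theory Defs
  imports Complex_Main
begin

text \<open>Vertex set V is a finite type 'v. Spins of the lifted chain: 0, 1, star.\<close>

datatype spin = Zero | One | Star

lemma UNIV_spin: "(UNIV :: spin set) = {Zero, One, Star}"
  using spin.exhaust by auto

instance spin :: finite
  by standard (simp add: UNIV_spin)

fun spin_rank :: "spin \<Rightarrow> nat" where
  "spin_rank Zero = 0" | "spin_rank One = 1" | "spin_rank Star = 2"

definition cfg_le :: "('v \<Rightarrow> spin) \<Rightarrow> ('v \<Rightarrow> spin) \<Rightarrow> bool" where
  "cfg_le X Y \<longleftrightarrow> (\<forall>i. spin_rank (X i) \<le> spin_rank (Y i))"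

definition increasing :: "(('v \<Rightarrow> spin) \<Rightarrow> real) \<Rightarrow> bool" where
  "increasing f \<longleftrightarrow> (\<forall>X Y. cfg_le X Y \<longrightarrow> f X \<le> f Y)"

definition is_distr :: "('a::finite \<Rightarrow> real) \<Rightarrow> bool" where
  "is_distr p \<longleftrightarrow> (\<forall>x. 0 \<le> p x) \<and> (\<Sum>x\<in>UNIV. p x) = 1"

definition contr :: "('v \<Rightarrow> spin) \<Rightarrow> ('v \<Rightarrow> bool)" where
  "contr X = (\<lambda>i. X i \<noteq> Zero)"

text \<open>Transition probability of the random lift map, coordinatewise and independent.\<close>
fun lift1 :: "real \<Rightarrow> bool \<Rightarrow> spin \<Rightarrow> real" where
  "lift1 \<theta> False Zero = 1"
| "lift1 \<theta> False One = 0"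
| "lift1 \<theta> False Star = 0"
| "lift1 \<theta> True Zero = 0"
| "lift1 \<theta> True One = \<theta>"
| "lift1 \<theta> True Star = 1 - \<theta>"

definition lift_prob :: "real \<Rightarrow> ('v::finite \<Rightarrow> bool) \<Rightarrow> ('v \<Rightarrow> spin) \<Rightarrow> real" where
  "lift_prob \<theta> \<sigma> X = (\<Prod>i\<in>UNIV. lift1 \<theta> (\<sigma> i) (X i))"

definition piL :: "(('v::finite \<Rightarrow> bool) \<Rightarrow> real) \<Rightarrow> real \<Rightarrow> ('v \<Rightarrow> spin) \<Rightarrow> real" where
  "piL \<mu> \<theta> X = (\<Sum>\<sigma>\<in>UNIV. \<mu> \<sigma> * lift_prob \<theta> \<sigma> X)"

definition Omega :: "(('v::finite \<Rightarrow> spin) \<Rightarrow> real) \<Rightarrow> ('v \<Rightarrow> spin) set" where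
  "Omega p = {X. p X > 0}"

definition tilt :: "real \<Rightarrow> (('v::finite \<Rightarrow> bool) \<Rightarrow> real) \<Rightarrow> ('v \<Rightarrow> bool) \<Rightarrow> real" where
  "tilt \<theta> \<mu> \<sigma> = \<mu> \<sigma> * \<theta> ^ card {i. \<sigma> i} /
      (\<Sum>\<tau>\<in>UNIV. \<mu> \<tau> * \<theta> ^ card {i. \<tau> i})"

definition cond_marg :: "(('v \<Rightarrow> 'a::finite) \<Rightarrow> real) \<Rightarrow> 'v \<Rightarrow> ('v \<Rightarrow> 'a) \<Rightarrow> 'a \<Rightarrow> real" where
  "cond_marg p i \<sigma> b = p (\<sigma>(i := b)) / (\<Sum>c\<in>UNIV. p (\<sigma>(i := c)))"

definition P_piGD :: "(('v::finite \<Rightarrow> bool) \<Rightarrow> real) \<Rightarrow> real \<Rightarrow> 'v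
    \<Rightarrow> ('v \<Rightarrow> spin) \<Rightarrow> ('v \<Rightarrow> spin) \<Rightarrow> real" where
  "P_piGD \<mu> \<theta> i X Y =
     (if (\<forall>j. j \<noteq> i \<longrightarrow> Y j = X j) then cond_marg (piL \<mu> \<theta>) i X (Y i) else 0)"

definition P_sGD :: "(('v::finite \<Rightarrow> bool) \<Rightarrow> real) \<Rightarrow> real \<Rightarrow> 'v
    \<Rightarrow> ('v \<Rightarrow> spin) \<Rightarrow> ('v \<Rightarrow> spin) \<Rightarrow> real" where
  "P_sGD \<mu> \<theta> i X Y =
     (if X i = Star then (if Y = X then 1 else 0)
      else if (\<forall>j. j \<noteq> i \<longrightarrow> Y j = X j) \<and> Y i \<noteq> Star
        then cond_marg (tilt \<theta> \<mu>) i (contr X) (Y i = One)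
      else 0)"

definition kapply :: "('a::finite \<Rightarrow> real) \<Rightarrow> ('a \<Rightarrow> 'a \<Rightarrow> real) \<Rightarrow> 'a \<Rightarrow> real" where
  "kapply \<nu> P Y = (\<Sum>X\<in>UNIV. \<nu> X * P X Y)"

definition sd_le :: "(('v::finite \<Rightarrow> spin) \<Rightarrow> real) \<Rightarrow> (('v \<Rightarrow> spin) \<Rightarrow> real) \<Rightarrow> bool" where
  "sd_le \<nu> \<nu>' \<longleftrightarrow> (\<forall>f. increasing f \<and> (\<forall>X. 0 \<le> f X) \<longrightarrow>
      (\<Sum>X\<in>UNIV. \<nu> X * f X) \<le> (\<Sum>X\<in>UNIV. \<nu>' X * f X))"

end

theory Submission
  imports Defs
begin

lemma core:
  fixes a b t n0 n1 n2 f0 f1 f2 :: real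
  assumes "a \<ge> 0" "b \<ge> 0" "0 < t" "t < 1" "n0 \<ge> 0" "n1 \<ge> 0" "n2 \<ge> 0"
    "f0 \<le> f1" "f1 \<le> f2"
    "a = 0 \<Longrightarrow> n0 = 0" "b = 0 \<Longrightarrow> n1 = 0" "b = 0 \<Longrightarrow> n2 = 0"
    "a > 0 \<Longrightarrow> b > 0 \<Longrightarrow> n0 * ((1-t)*b) \<le> n2 * a"
    "b > 0 \<Longrightarrow> n1 * (1-t) \<le> n2 * t"
  shows "n0 * (a/(a+b)*f0 + t*b/(a+b)*f1 + (1-t)*b/(a+b)*f2)
       + n1 * (a/(a+b)*f0 + t*b/(a+b)*f1 + (1-t)*b/(a+b)*f2)
       + n2 * (a/(a+b)*f0 + t*b/(a+b)*f1 + (1-t)*b/(a+b)*f2)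
     \<le> n0 * (a/(a+t*b)*f0 + t*b/(a+t*b)*f1) + n1 * (a/(a+t*b)*f0 + t*b/(a+t*b)*f1) + n2 * f2"
proof (cases "a + b = 0")
  case True
  then have "a = 0" "b = 0" using assms by auto
  then show ?thesis using assms by simp
next
  case False
  then have ab: "a + b > 0" using assms by auto
  have atb: "a + t*b > 0"
  proof (cases "a = 0")
    case True then show ?thesis using ab assms by simp
  next
    case False then show ?thesis using assms by (simp add: add_pos_nonneg)
  qed
  define G where "G = f2*(a+t*b) - (a*f0 + t*b*f1)"
  have G: "G \<ge> 0" unfolding G_def
  proof -
    have "a*f0 \<le> a*f2" using assms by (intro mult_left_mono) auto
    moreover have "t*b*f1 \<le> t*b*f2" using assms by (intro mult_left_mono) auto
    ultimately show "0 \<le> f2 * (a + t * b) - (a * f0 + t * b * f1)" by (simp add: algebra_simps)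
  qed
  have h0: "n0 * ((1-t)*b) \<le> n2 * a"
  proof (cases "a = 0")
    case True then show ?thesis using assms by simp
  next
    case F: False
    show ?thesis
    proof (cases "b = 0")
      case True then show ?thesis using assms by simp
    next
      case False then show ?thesis using assms F by simp
    qed
  qed
  have h1: "n1 * ((1-t)*b) \<le> n2 * (t*b)"
  proof (cases "b = 0")
    case True then show ?thesis using assms by simp
  next
    case False
    then have "n1 * (1-t) * b \<le> n2 * t * b" using assms by (intro mult_right_mono) auto
    then show ?thesis by (simp add: ac_simps)
  qed
  have key: "(n0+n1)*((1-t)*b) - n2*(a+t*b) \<le> 0" using h0 h1 by (simp add: algebra_simps)
  have eq: "n0 * (a/(a+b)*f0 + t*b/(a+b)*f1 + (1-t)*b/(a+b)*f2)
       + n1 * (a/(a+b)*f0 + t*b/(a+b)*f1 + (1-t)*b/(a+b)*f2)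
       + n2 * (a/(a+b)*f0 + t*b/(a+b)*f1 + (1-t)*b/(a+b)*f2)
     - (n0 * (a/(a+t*b)*f0 + t*b/(a+t*b)*f1) + n1 * (a/(a+t*b)*f0 + t*b/(a+t*b)*f1) + n2 * f2)
     = G * ((n0+n1)*((1-t)*b) - n2*(a+t*b)) / ((a+b)*(a+t*b))"
    using ab atb unfolding G_def by (simp add: divide_simps) algebra
  have "G * ((n0+n1)*((1-t)*b) - n2*(a+t*b)) / ((a+b)*(a+t*b)) \<le> 0"
    using G key ab atb by (intro divide_nonpos_pos mult_nonneg_nonpos) auto
  then show ?thesis using eq by linarith
qed

definition wt :: "real \<Rightarrow> spin \<Rightarrow> real" where
  "wt t s = lift1 t (s \<noteq> Zero) s"

lemma wt_simps[simp]: "wt t Zero = 1" "wt t One = t" "wt t Star = 1 - t"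
  by (simp_all add: wt_def)

lemma lift_prob_zero:
  assumes "\<sigma> \<noteq> contr X"
  shows "lift_prob t \<sigma> (X::'v::finite \<Rightarrow> spin) = 0"
proof -
  obtain j where j: "\<sigma> j \<noteq> (X j \<noteq> Zero)" using assms unfolding contr_def by auto
  have "lift1 t (\<sigma> j) (X j) = 0" using j by (cases "X j"; cases "\<sigma> j") auto
  then show ?thesis unfolding lift_prob_def by (intro prod_zero) auto
qed

lemma piL_eq: "piL \<mu> t (X::'v::finite \<Rightarrow> spin) = \<mu> (contr X) * (\<Prod>j\<in>UNIV. wt t (X j))"
proof -
  have "piL \<mu> t X = (\<Sum>\<sigma>\<in>UNIV. if \<sigma> = contr X then \<mu> \<sigma> * lift_prob t \<sigma> X else 0)"
    unfolding piL_def by (intro sum.cong) (auto simp: lift_prob_zero)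
  also have "\<dots> = \<mu> (contr X) * lift_prob t (contr X) X" by simp
  finally show ?thesis unfolding lift_prob_def wt_def contr_def by simp
qed

lemma contr_upd: "contr (X(i := s)) = (contr X)(i := (s \<noteq> Zero))"
  unfolding contr_def by auto

lemma piL_upd:
  "piL \<mu> t ((X::'v::finite \<Rightarrow> spin)(i := s)) =
     \<mu> ((contr X)(i := (s \<noteq> Zero))) * wt t s * (\<Prod>j\<in>UNIV - {i}. wt t (X j))"
proof -
  have "(\<Prod>j\<in>UNIV. wt t ((X(i := s)) j)) = wt t s * (\<Prod>j\<in>UNIV - {i}. wt t ((X(i := s)) j))"
    by (subst prod.remove[of UNIV i]) auto
  also have "(\<Prod>j\<in>UNIV - {i}. wt t ((X(i := s)) j)) = (\<Prod>j\<in>UNIV - {i}. wt t (X j))"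
    by (intro prod.cong) auto
  finally show ?thesis by (simp add: piL_eq contr_upd)
qed

lemma sum_upd:
  fixes h :: "('v::finite \<Rightarrow> 'a::finite) \<Rightarrow> real"
  shows "(\<Sum>Y\<in>UNIV. if (\<forall>j. j \<noteq> i \<longrightarrow> Y j = X j) then h Y else 0) = (\<Sum>s\<in>UNIV. h (X(i := s)))"
proof -
  have "(\<Sum>Y\<in>UNIV. if (\<forall>j. j \<noteq> i \<longrightarrow> Y j = X j) then h Y else 0)
      = (\<Sum>Y\<in>{Y. \<forall>j. j \<noteq> i \<longrightarrow> Y j = X j}. h Y)"
    by (simp add: sum.If_cases Int_def)
  also have "{Y. \<forall>j. j \<noteq> i \<longrightarrow> Y j = X j} = range (\<lambda>s. X(i := s))"
  proof safe
    fix Y assume "\<forall>j. j \<noteq> i \<longrightarrow> Y j = X j"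
    then have "Y = X(i := Y i)" by auto
    then show "Y \<in> range (\<lambda>s. X(i := s))" by blast
  qed auto
  also have "(\<Sum>Y\<in>range (\<lambda>s. X(i := s)). h Y) = (\<Sum>s\<in>UNIV. h (X(i := s)))"
    by (subst sum.reindex) (auto simp: inj_on_def dest: fun_cong[where x=i])
  finally show ?thesis .
qed

lemma sum_split:
  fixes g :: "('v::finite \<Rightarrow> 'a::finite) \<Rightarrow> real"
  shows "(\<Sum>X\<in>UNIV. g X) = (\<Sum>\<eta>\<in>{\<eta>. \<eta> i = c}. \<Sum>s\<in>UNIV. g (\<eta>(i := s)))"
proof -
  have bij: "bij_betw (\<lambda>(\<eta>, s). \<eta>(i := s)) ({\<eta>. \<eta> i = c} \<times> UNIV) UNIV"
  proof (rule bij_betwI')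
    fix x y assume "x \<in> {\<eta>. \<eta> i = c} \<times> (UNIV::'a set)" "y \<in> {\<eta>. \<eta> i = c} \<times> (UNIV::'a set)"
    then show "((case x of (\<eta>, s) \<Rightarrow> \<eta>(i := s)) = (case y of (\<eta>, s) \<Rightarrow> \<eta>(i := s))) = (x = y)"
    proof (cases x, cases y)
      fix a b aa ba assume xy: "x = (a, b)" "y = (aa, ba)"
      have "a(i := b) = aa(i := ba) \<Longrightarrow> a i = aa i \<Longrightarrow> a = aa \<and> b = ba"
      proof
        assume e: "a(i := b) = aa(i := ba)" and ii: "a i = aa i"
        show "a = aa"
        proof
          fix j show "a j = aa j" using fun_cong[OF e, of j] ii by (cases "j = i") auto
        qed
        show "b = ba" using fun_cong[OF e, of i] by simp
      qed
      then show ?thesis using xy \<open>x \<in> _\<close> \<open>y \<in> _\<close> by auto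
    qed
  next
    fix Y :: "'v \<Rightarrow> 'a"
    show "\<exists>x\<in>{\<eta>. \<eta> i = c} \<times> UNIV. Y = (case x of (\<eta>, s) \<Rightarrow> \<eta>(i := s))"
      by (rule bexI[of _ "(Y(i := c), Y i)"]) auto
  qed auto
  have "(\<Sum>X\<in>UNIV. g X) = (\<Sum>x\<in>{\<eta>. \<eta> i = c} \<times> UNIV. g ((\<lambda>(\<eta>, s). \<eta>(i := s)) x))"
    using sum.reindex_bij_betw[OF bij, of g] by simp
  also have "\<dots> = (\<Sum>\<eta>\<in>{\<eta>. \<eta> i = c}. \<Sum>s\<in>UNIV. g (\<eta>(i := s)))"
    by (simp add: sum.cartesian_product case_prod_beta)
  finally show ?thesis .
qed

lemma kapply_swap:
  fixes \<nu> :: "('a::finite) \<Rightarrow> real"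
  shows "(\<Sum>Y\<in>UNIV. kapply \<nu> P Y * f Y) = (\<Sum>X\<in>UNIV. \<nu> X * (\<Sum>Y\<in>UNIV. P X Y * f Y))"
  unfolding kapply_def sum_distrib_left sum_distrib_right
  by (subst sum.swap) (simp add: ac_simps)

lemma card_upd_true: "card {j. ((\<sigma>::'v::finite \<Rightarrow> bool)(i := True)) j} = Suc (card ({j. \<sigma> j} - {i}))"
proof -
  have e: "{j. (\<sigma>(i := True)) j} = insert i ({j. \<sigma> j} - {i})" by auto
  have c: "card (insert i ({j. \<sigma> j} - {i})) = Suc (card ({j. \<sigma> j} - {i}))"
    by (intro card_insert_disjoint) auto
  show ?thesis unfolding e by (rule c)
qed

lemma card_upd_false: "card {j. ((\<sigma>::'v::finite \<Rightarrow> bool)(i := False)) j} = card ({j. \<sigma> j} - {i})"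
proof -
  have "{j. (\<sigma>(i := False)) j} = {j. \<sigma> j} - {i}" by auto
  then show ?thesis by simp
qed

theorem lemma7p1:
  fixes \<mu> :: "('v::finite \<Rightarrow> bool) \<Rightarrow> real" and \<theta> :: real
    and i :: 'v and \<nu> :: "('v \<Rightarrow> spin) \<Rightarrow> real"
  assumes "is_distr \<mu>"
    and "0 < \<theta>" and "\<theta> < 1"
    and "is_distr \<nu>"
    and "\<forall>X. X \<notin> Omega (piL \<mu> \<theta>) \<longrightarrow> \<nu> X = 0"
    and "\<forall>X\<in>Omega (piL \<mu> \<theta>). \<forall>Y\<in>Omega (piL \<mu> \<theta>).
           cfg_le X Y \<longrightarrow> \<nu> X / piL \<mu> \<theta> X \<le> \<nu> Y / piL \<mu> \<theta> Y"
  shows "sd_le (kapply \<nu> (P_piGD \<mu> \<theta> i)) (kapply \<nu> (P_sGD \<mu> \<theta> i))"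
  unfolding sd_le_def
proof (intro allI impI, elim conjE)
  fix f :: "('v \<Rightarrow> spin) \<Rightarrow> real"
  assume inc: "increasing f" and fnn: "\<forall>X. 0 \<le> f X"
  have mu_nn: "\<And>\<sigma>. 0 \<le> \<mu> \<sigma>" using assms(1) unfolding is_distr_def by auto
  have nu_nn: "\<And>X. 0 \<le> \<nu> X" using assms(4) unfolding is_distr_def by auto
  define Z where "Z = (\<Sum>\<tau>\<in>UNIV. \<mu> \<tau> * \<theta> ^ card {i. \<tau> i})"
  have Zpos: "Z > 0"
  proof -
    obtain \<tau> where "\<mu> \<tau> \<noteq> 0"
      using assms(1) unfolding is_distr_def by (metis (no_types, lifting) sum.neutral zero_neq_one)
    then have "\<mu> \<tau> * \<theta> ^ card {i. \<tau> i} > 0" using mu_nn[of \<tau>] assms(2)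
      by (simp add: order_le_neq_trans)
    then show ?thesis unfolding Z_def
      by (intro sum_pos2[where i=\<tau>]) (auto intro!: mult_nonneg_nonneg mu_nn simp: less_imp_le assms(2))
  qed
  have tilt_eq: "\<And>\<tau>. tilt \<theta> \<mu> \<tau> = \<mu> \<tau> * \<theta> ^ card {i. \<tau> i} / Z"
    unfolding tilt_def Z_def by simp
  define Fp where "Fp X = (\<Sum>Y\<in>UNIV. P_piGD \<mu> \<theta> i X Y * f Y)" for X
  define Fs where "Fs X = (\<Sum>Y\<in>UNIV. P_sGD \<mu> \<theta> i X Y * f Y)" for X
  have "(\<Sum>X\<in>UNIV. \<nu> X * Fp X) \<le> (\<Sum>X\<in>UNIV. \<nu> X * Fs X)"
  proof -
    have "(\<Sum>X\<in>UNIV. \<nu> X * Fp X) = (\<Sum>\<eta>\<in>{\<eta>. \<eta> i = Zero}. \<Sum>s\<in>UNIV. \<nu> (\<eta>(i := s)) * Fp (\<eta>(i := s)))"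
      by (rule sum_split)
    also have "\<dots> \<le> (\<Sum>\<eta>\<in>{\<eta>. \<eta> i = Zero}. \<Sum>s\<in>UNIV. \<nu> (\<eta>(i := s)) * Fs (\<eta>(i := s)))"
    proof (rule sum_mono)
      fix \<eta> :: "'v \<Rightarrow> spin"
      define \<sigma> where "\<sigma> = contr \<eta>"
      define a where "a = \<mu> (\<sigma>(i := False))"
      define b where "b = \<mu> (\<sigma>(i := True))"
      define C where "C = (\<Prod>j\<in>UNIV - {i}. wt \<theta> (\<eta> j))"
      define k where "k = card ({j. \<sigma> j} - {i})"
      have a0: "a \<ge> 0" and b0: "b \<ge> 0" unfolding a_def b_def by (auto intro: mu_nn)
      have Cpos: "C > 0" unfolding C_def
      proof (rule prod_pos)
        fix j show "0 < wt \<theta> (\<eta> j)" using assms(2,3) by (cases "\<eta> j") auto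
      qed
      have p0: "piL \<mu> \<theta> (\<eta>(i := Zero)) = a * C"
        by (simp add: piL_upd a_def C_def \<sigma>_def)
      have p1: "piL \<mu> \<theta> (\<eta>(i := One)) = (\<theta> * b) * C"
        by (simp add: piL_upd b_def C_def \<sigma>_def)
      have p2: "piL \<mu> \<theta> (\<eta>(i := Star)) = ((1 - \<theta>) * b) * C"
        by (simp add: piL_upd b_def C_def \<sigma>_def)
      have den: "(\<Sum>c\<in>UNIV. piL \<mu> \<theta> (\<eta>(i := c))) = (a + b) * C"
        by (simp add: UNIV_spin p0 p1 p2 algebra_simps)
      have cmp: "cond_marg (piL \<mu> \<theta>) i (\<eta>(i := s)) t =
           (case t of Zero \<Rightarrow> a / (a + b) | One \<Rightarrow> \<theta> * b / (a + b) | Star \<Rightarrow> (1 - \<theta>) * b / (a + b))" for s t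
        unfolding cond_marg_def using Cpos
        by (cases t) (simp_all add: den p0 p1 p2)
      have Fp_eq: "Fp (\<eta>(i := s)) = a / (a + b) * f (\<eta>(i := Zero)) + \<theta> * b / (a + b) * f (\<eta>(i := One))
          + (1 - \<theta>) * b / (a + b) * f (\<eta>(i := Star))" for s
      proof -
        have "Fp (\<eta>(i := s)) = (\<Sum>Y\<in>UNIV. if (\<forall>j. j \<noteq> i \<longrightarrow> Y j = (\<eta>(i := s)) j)
              then cond_marg (piL \<mu> \<theta>) i (\<eta>(i := s)) (Y i) * f Y else 0)"
          unfolding Fp_def P_piGD_def by (intro sum.cong) auto
        also have "\<dots> = (\<Sum>t\<in>UNIV. cond_marg (piL \<mu> \<theta>) i (\<eta>(i := s)) t * f (\<eta>(i := t)))"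
          by (subst sum_upd) (simp only: fun_upd_upd fun_upd_same)
        finally show ?thesis by (simp add: UNIV_spin cmp)
      qed
      have t0: "tilt \<theta> \<mu> (\<sigma>(i := False)) = a * (\<theta> ^ k / Z)"
        unfolding tilt_eq card_upd_false a_def k_def by simp
      have t1: "tilt \<theta> \<mu> (\<sigma>(i := True)) = (\<theta> * b) * (\<theta> ^ k / Z)"
        unfolding tilt_eq card_upd_true b_def k_def by simp
      have nz: "\<theta> ^ k / Z \<noteq> 0" using Zpos assms(2) by simp
      have cmt: "cond_marg (tilt \<theta> \<mu>) i (contr (\<eta>(i := s))) \<beta> =
           (if \<beta> then \<theta> * b / (a + \<theta> * b) else a / (a + \<theta> * b))" for s \<beta>
      proof -
        have "(\<Sum>c\<in>UNIV. tilt \<theta> \<mu> (\<sigma>(i := c))) = (a + \<theta> * b) * (\<theta> ^ k / Z)"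
          by (simp add: UNIV_bool t0 t1 algebra_simps add_divide_distrib)
        then show ?thesis unfolding cond_marg_def contr_upd \<sigma>_def[symmetric] using nz
          by (cases \<beta>) (simp_all add: t0 t1)
      qed
      have Fs_eq: "Fs (\<eta>(i := s)) = a / (a + \<theta> * b) * f (\<eta>(i := Zero)) + \<theta> * b / (a + \<theta> * b) * f (\<eta>(i := One))"
        if "s \<noteq> Star" for s
      proof -
        have "Fs (\<eta>(i := s)) = (\<Sum>Y\<in>UNIV. if (\<forall>j. j \<noteq> i \<longrightarrow> Y j = (\<eta>(i := s)) j)
              then (if Y i \<noteq> Star then cond_marg (tilt \<theta> \<mu>) i (contr (\<eta>(i := s))) (Y i = One) * f Y else 0) else 0)"
          unfolding Fs_def P_sGD_def using that by (intro sum.cong) auto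
        also have "\<dots> = (\<Sum>t\<in>UNIV. (if t \<noteq> Star then cond_marg (tilt \<theta> \<mu>) i (contr (\<eta>(i := s))) (t = One) * f (\<eta>(i := t)) else 0))"
          by (subst sum_upd) (simp only: fun_upd_upd fun_upd_same)
        finally show ?thesis by (simp add: UNIV_spin cmt)
      qed
      have Fs2: "Fs (\<eta>(i := Star)) = f (\<eta>(i := Star))"
      proof -
        have "Fs (\<eta>(i := Star)) = (\<Sum>Y\<in>UNIV. if Y = \<eta>(i := Star) then f Y else 0)"
          unfolding Fs_def P_sGD_def by (intro sum.cong) auto
        then show ?thesis by simp
      qed
      have le: "cfg_le (\<eta>(i := s)) (\<eta>(i := s'))" if "spin_rank s \<le> spin_rank s'" for s s'
        unfolding cfg_le_def using that by auto
      have f01: "f (\<eta>(i := Zero)) \<le> f (\<eta>(i := One))" and f12: "f (\<eta>(i := One)) \<le> f (\<eta>(i := Star))"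
        using inc le unfolding increasing_def by auto
      have om: "X \<in> Omega (piL \<mu> \<theta>) \<longleftrightarrow> piL \<mu> \<theta> X > 0" for X unfolding Omega_def by simp
      have n0z: "a = 0 \<Longrightarrow> \<nu> (\<eta>(i := Zero)) = 0" using assms(5) om p0 by auto
      have n1z: "b = 0 \<Longrightarrow> \<nu> (\<eta>(i := One)) = 0" using assms(5) om p1 by auto
      have n2z: "b = 0 \<Longrightarrow> \<nu> (\<eta>(i := Star)) = 0" using assms(5) om p2 by auto
      have r0: "\<nu> (\<eta>(i := Zero)) * ((1 - \<theta>) * b) \<le> \<nu> (\<eta>(i := Star)) * a" if "a > 0" "b > 0"
      proof -
        have q0: "piL \<mu> \<theta> (\<eta>(i := Zero)) > 0" using p0 that Cpos by simp
        have q2: "piL \<mu> \<theta> (\<eta>(i := Star)) > 0" using p2 that Cpos assms(3) by simp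
        have "\<nu> (\<eta>(i := Zero)) / piL \<mu> \<theta> (\<eta>(i := Zero)) \<le> \<nu> (\<eta>(i := Star)) / piL \<mu> \<theta> (\<eta>(i := Star))"
          using assms(6) q0 q2 om le[of Zero Star] by simp
        then have "\<nu> (\<eta>(i := Zero)) * (((1 - \<theta>) * b) * C) \<le> \<nu> (\<eta>(i := Star)) * (a * C)"
          using q0 q2 p0 p2 by (simp add: field_simps)
        then have "(\<nu> (\<eta>(i := Zero)) * ((1 - \<theta>) * b)) * C \<le> (\<nu> (\<eta>(i := Star)) * a) * C"
          by (simp add: ac_simps)
        then show ?thesis using Cpos mult_le_cancel_right_pos by blast
      qed
      have r1: "\<nu> (\<eta>(i := One)) * (1 - \<theta>) \<le> \<nu> (\<eta>(i := Star)) * \<theta>" if "b > 0"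
      proof -
        have q1: "piL \<mu> \<theta> (\<eta>(i := One)) > 0" using p1 that Cpos assms(2) by simp
        have q2: "piL \<mu> \<theta> (\<eta>(i := Star)) > 0" using p2 that Cpos assms(3) by simp
        have "\<nu> (\<eta>(i := One)) / piL \<mu> \<theta> (\<eta>(i := One)) \<le> \<nu> (\<eta>(i := Star)) / piL \<mu> \<theta> (\<eta>(i := Star))"
          using assms(6) q1 q2 om le[of One Star] by simp
        then have "\<nu> (\<eta>(i := One)) * (((1 - \<theta>) * b) * C) \<le> \<nu> (\<eta>(i := Star)) * ((\<theta> * b) * C)"
          using q1 q2 p1 p2 by (simp add: field_simps)
        then have "(\<nu> (\<eta>(i := One)) * (1 - \<theta>)) * (b * C) \<le> (\<nu> (\<eta>(i := Star)) * \<theta>) * (b * C)"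
          by (simp add: ac_simps)
        then show ?thesis using Cpos that mult_le_cancel_right_pos by (metis mult_pos_pos)
      qed
      have "\<nu> (\<eta>(i := Zero)) * Fp (\<eta>(i := Zero)) + \<nu> (\<eta>(i := One)) * Fp (\<eta>(i := One))
            + \<nu> (\<eta>(i := Star)) * Fp (\<eta>(i := Star))
         \<le> \<nu> (\<eta>(i := Zero)) * Fs (\<eta>(i := Zero)) + \<nu> (\<eta>(i := One)) * Fs (\<eta>(i := One))
            + \<nu> (\<eta>(i := Star)) * Fs (\<eta>(i := Star))"
        unfolding Fp_eq Fs2 Fs_eq[of Zero, OF spin.distinct(3)] Fs_eq[of One, OF spin.distinct(5)]
        by (rule core[OF a0 b0 assms(2,3) nu_nn nu_nn nu_nn f01 f12 n0z n1z n2z r0 r1])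
      then show "(\<Sum>s\<in>UNIV. \<nu> (\<eta>(i := s)) * Fp (\<eta>(i := s))) \<le> (\<Sum>s\<in>UNIV. \<nu> (\<eta>(i := s)) * Fs (\<eta>(i := s)))"
        by (simp add: UNIV_spin)
    qed
    also have "\<dots> = (\<Sum>X\<in>UNIV. \<nu> X * Fs X)"
      by (rule sum_split[symmetric])
    finally show ?thesis .
  qed
  then show "(\<Sum>X\<in>UNIV. kapply \<nu> (P_piGD \<mu> \<theta> i) X * f X) \<le> (\<Sum>X\<in>UNIV. kapply \<nu> (P_sGD \<mu> \<theta> i) X * f X)"
    unfolding kapply_swap Fp_def Fs_def .
qed

end
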